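(* Let $G$ be a finite loopless graph (parallel edges allowed). There exist a maximal spanning forest $F$ of $G$ and an orientation $\mathcal{O}_1$ of $G$ such that, with the basis $B_{\mathcal{C}}$ built from $(F,\mathcal{O}_1)$, $\langle x_i,e_j\rangle\in\{0,1\}$ for all $x_i\in B_{\mathcal{C}}$ and $e_j\in E(G)$; and an orientation $\mathcal{O}_2$ such that, with the basis $B_{\mathcal{F}}$ built from $(F,\mathcal{O}_2)$, $\langle x_i,e_j\rangle\in\{0,1\}$ for all $x_i\in B_{\mathcal{F}}$ and $e_j\in E(G)$.
   Context: For an orientation $\mathcal{O}$, $C_1(G;\mathbb{Z})$ is the free abelian group on $E=\{e_1,\dots,e_n\}$, each $e_j$ taken with its $\mathcal{O}$-direction, $E$ orthonormal. Given a maximal spanning forest $F$: for $e_i\in E(F)$, $F\setminus e_i$ has components $K_1,K_2$ with $e_i$ directed from $K_1$ to $K_2$, and $x_i=\sum_j\epsilon_je_j$ over the edges $e_j$ between $K_1$ and $K_2$, $\epsilon_j=+1$ if $e_j$ is directed out of $K_1$ in $\mathcal{O}$, else $-1$; $B_{\mathcal{C}}=\{x_i:e_i\in E(F)\}$. For $e_i\notin E(F)$, $x_i=\sum_j\epsilon_je_j$ over the unique cycle in $F\cup e_i$, oriented cyclically so that $e_i$ keeps its $\mathcal{O}$-direction, $\epsilon_j=\pm1$ according as the cyclic and $\mathcal{O}$ directions agree or differ; $B_{\mathcal{F}}=\{x_i:e_i\notin E(F)\}$. *)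

theory Defs
  imports Main
begin

(* A finite loopless multigraph: vertex set V, edge set E (edge labels, so parallel
   edges are allowed), and inc e = set of the two distinct endpoints of e. *)
definition loopless_multigraph :: "'v set \<Rightarrow> 'e set \<Rightarrow> ('e \<Rightarrow> 'v set) \<Rightarrow> bool" where
  "loopless_multigraph V E inc \<longleftrightarrow> finite V \<and> finite E \<and>
     (\<forall>e\<in>E. inc e \<subseteq> V \<and> card (inc e) = 2)"

(* An orientation: each edge e gets a direction, from tail fst (Or e) to head snd (Or e). *)
definition orientation :: "'e set \<Rightarrow> ('e \<Rightarrow> 'v set) \<Rightarrow> ('e \<Rightarrow> 'v \<times> 'v) \<Rightarrow> bool" where
  "orientation E inc Or \<longleftrightarrow> (\<forall>e\<in>E. inc e = {fst (Or e), snd (Or e)})"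

fun is_walk :: "('e \<Rightarrow> 'v set) \<Rightarrow> 'e set \<Rightarrow> 'v \<Rightarrow> ('v \<times> 'e \<times> 'v) list \<Rightarrow> 'v \<Rightarrow> bool" where
  "is_walk inc S u [] w = (u = w)"
| "is_walk inc S u ((a, e, b) # p) w = (a = u \<and> e \<in> S \<and> inc e = {a, b} \<and> is_walk inc S b p w)"

definition is_path :: "('e \<Rightarrow> 'v set) \<Rightarrow> 'e set \<Rightarrow> 'v \<Rightarrow> ('v \<times> 'e \<times> 'v) list \<Rightarrow> 'v \<Rightarrow> bool" where
  "is_path inc S u p w \<longleftrightarrow> is_walk inc S u p w \<and> distinct (u # map (\<lambda>s. snd (snd s)) p)"

(* Cycles: nonempty closed walks with distinct edges and distinct vertices
   (a pair of parallel edges is a cycle of length 2). *)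
definition is_cycle :: "('e \<Rightarrow> 'v set) \<Rightarrow> 'e set \<Rightarrow> 'v \<Rightarrow> ('v \<times> 'e \<times> 'v) list \<Rightarrow> bool" where
  "is_cycle inc S u p \<longleftrightarrow> p \<noteq> [] \<and> is_walk inc S u p u \<and>
     distinct (map (\<lambda>s. fst (snd s)) p) \<and> distinct (map (\<lambda>s. snd (snd s)) p)"

definition forest :: "('e \<Rightarrow> 'v set) \<Rightarrow> 'e set \<Rightarrow> bool" where
  "forest inc F \<longleftrightarrow> \<not> (\<exists>u p. is_cycle inc F u p)"

definition max_spanning_forest :: "'e set \<Rightarrow> ('e \<Rightarrow> 'v set) \<Rightarrow> 'e set \<Rightarrow> bool" where
  "max_spanning_forest E inc F \<longleftrightarrow> F \<subseteq> E \<and> forest inc F \<and>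
     (\<forall>e\<in>E - F. \<not> forest inc (insert e F))"

definition component :: "('e \<Rightarrow> 'v set) \<Rightarrow> 'e set \<Rightarrow> 'v \<Rightarrow> 'v set" where
  "component inc S v = {w. \<exists>p. is_walk inc S v p w}"

(* Coefficient <x_i, e_j> of the fundamental cut vector x_i (e_i \<in> F):
   K1 = component of the tail of e_i in F - e_i, K2 = component of its head. *)
definition cut_coeff :: "'e set \<Rightarrow> ('e \<Rightarrow> 'v set) \<Rightarrow> 'e set \<Rightarrow> ('e \<Rightarrow> 'v \<times> 'v) \<Rightarrow> 'e \<Rightarrow> 'e \<Rightarrow> int" where
  "cut_coeff E inc F Or i j =
     (let K1 = component inc (F - {i}) (fst (Or i));
          K2 = component inc (F - {i}) (snd (Or i))
      in if j \<in> E \<and> ((fst (Or j) \<in> K1 \<and> snd (Or j) \<in> K2) \<or> (fst (Or j) \<in> K2 \<and> snd (Or j) \<in> K1))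
         then (if fst (Or j) \<in> K1 then 1 else -1) else 0)"

(* Coefficient <x_i, e_j> of the fundamental cycle vector x_i (e_i \<notin> F): the unique
   cycle in F + e_i, traversed as e_i (tail to head) followed by the unique F-path
   from the head of e_i back to its tail. *)
definition cycle_coeff :: "('e \<Rightarrow> 'v set) \<Rightarrow> 'e set \<Rightarrow> ('e \<Rightarrow> 'v \<times> 'v) \<Rightarrow> 'e \<Rightarrow> 'e \<Rightarrow> int" where
  "cycle_coeff inc F Or i j =
     (let C = (fst (Or i), i, snd (Or i)) # (THE p. is_path inc F (snd (Or i)) p (fst (Or i)))
      in if (fst (Or j), j, snd (Or j)) \<in> set C then 1
         else if (snd (Or j), j, fst (Or j)) \<in> set C then -1 else 0)"

end

theory Submission
  imports Defs
begin


definition validS :: "'v set \<Rightarrow> 'e set \<Rightarrow> ('e \<Rightarrow> 'v set) \<Rightarrow> ('v \<Rightarrow> nat) \<Rightarrow> ('v \<Rightarrow> 'v) \<Rightarrow> ('v \<Rightarrow> 'e) \<Rightarrow> bool" where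
  "validS V E inc dep par t \<longleftrightarrow> (\<forall>v\<in>V. 0 < dep v \<longrightarrow> par v \<in> V \<and> Suc (dep (par v)) = dep v \<and> t v \<in> E \<and> inc (t v) = {v, par v})"

definition desc :: "'v set \<Rightarrow> ('v \<Rightarrow> nat) \<Rightarrow> ('v \<Rightarrow> 'v) \<Rightarrow> 'v \<Rightarrow> 'v set" where
  "desc V dep par c = {w\<in>V. \<exists>n\<le>dep w. (par^^n) w = c}"

lemma chain:
  assumes vs: "validS V E inc dep par t" and v: "v \<in> V"
  shows "n \<le> dep v \<Longrightarrow> (par^^n) v \<in> V \<and> dep ((par^^n) v) = dep v - n"
proof (induction n)
  case 0 thus ?case using v by simp
next
  case (Suc n)
  then have h: "(par^^n) v \<in> V" "dep ((par^^n) v) = dep v - n" by auto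
  with Suc.prems have "0 < dep ((par^^n) v)" by simp
  with vs h have "par ((par^^n) v) \<in> V" "Suc (dep (par ((par^^n) v))) = dep ((par^^n) v)"
    unfolding validS_def by auto
  then show ?case using h by simp
qed

lemma desc_step:
  assumes vs: "validS V E inc dep par t" and w: "w \<in> V" "0 < dep w"
  shows "w \<in> desc V dep par c \<longleftrightarrow> (w = c \<or> par w \<in> desc V dep par c)"
proof -
  have pw: "par w \<in> V" "Suc (dep (par w)) = dep w" using vs w unfolding validS_def by auto
  show ?thesis
  proof
    assume "w \<in> desc V dep par c"
    then obtain n where n: "n \<le> dep w" "(par^^n) w = c" by (auto simp: desc_def)
    show "w = c \<or> par w \<in> desc V dep par c"
    proof (cases n)
      case 0 then show ?thesis using n by simp
    next
      case (Suc m)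
      then have "(par^^m) (par w) = c" using n by (metis comp_apply funpow_Suc_right)
      moreover have "m \<le> dep (par w)" using n Suc pw by simp
      ultimately show ?thesis using pw by (auto simp: desc_def)
    qed
  next
    assume "w = c \<or> par w \<in> desc V dep par c"
    then show "w \<in> desc V dep par c"
    proof
      assume "w = c" then show ?thesis using w by (auto simp: desc_def intro: exI[of _ 0])
    next
      assume "par w \<in> desc V dep par c"
      then obtain m where m: "m \<le> dep (par w)" "(par^^m) (par w) = c" by (auto simp: desc_def)
      have "(par^^(Suc m)) w = c" using m by (metis comp_apply funpow_Suc_right)
      moreover have "Suc m \<le> dep w" using m pw by simp
      ultimately show ?thesis using w by (auto simp: desc_def)
    qed
  qed
qed

lemma desc_dep:
  assumes vs: "validS V E inc dep par t" and "w \<in> desc V dep par c"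
  shows "c \<in> V \<and> dep c \<le> dep w \<and> (dep w = dep c \<longrightarrow> w = c) \<and> w \<in> V"
proof -
  obtain n where n: "w \<in> V" "n \<le> dep w" "(par^^n) w = c" using assms(2) by (auto simp: desc_def)
  from chain[OF vs n(1) n(2)] n show ?thesis
    by (cases "n = 0") auto
qed

lemma desc_refl: "c \<in> V \<Longrightarrow> c \<in> desc V dep par c"
  by (auto simp: desc_def intro: exI[of _ 0])

lemma desc_trans:
  assumes vs: "validS V E inc dep par t" and "b \<in> desc V dep par a" "a \<in> desc V dep par c"
  shows "b \<in> desc V dep par c"
proof -
  obtain n where n: "b \<in> V" "n \<le> dep b" "(par^^n) b = a" using assms(2) by (auto simp: desc_def)
  obtain m where m: "a \<in> V" "m \<le> dep a" "(par^^m) a = c" using assms(3) by (auto simp: desc_def)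
  have "dep a = dep b - n" using chain[OF vs n(1) n(2)] n by simp
  then have "m + n \<le> dep b" using m n by simp
  moreover have "(par^^(m+n)) b = c" using n m by (simp add: funpow_add)
  ultimately show ?thesis using n by (auto simp: desc_def)
qed

lemma desc_same:
  assumes vs: "validS V E inc dep par t" and "y \<in> desc V dep par b" "y \<in> desc V dep par b'"
    and "dep b = dep b'"
  shows "b = b'"
proof -
  obtain n where n: "y \<in> V" "n \<le> dep y" "(par^^n) y = b" using assms(2) by (auto simp: desc_def)
  obtain m where m: "m \<le> dep y" "(par^^m) y = b'" using assms(3) by (auto simp: desc_def)
  have "dep b = dep y - n" "dep b' = dep y - m" using chain[OF vs n(1)] n m by auto
  then have "n = m" using assms(4) n m by simp
  then show ?thesis using n m by simp
qed

lemma dep_bound: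
  assumes vs: "validS V E inc dep par t" and fin: "finite V" and v: "v \<in> V"
  shows "dep v < card V"
proof -
  have "inj_on (\<lambda>n. (par^^n) v) {0..dep v}"
  proof (rule inj_onI)
    fix a b assume "a \<in> {0..dep v}" "b \<in> {0..dep v}" "(par^^a) v = (par^^b) v"
    then show "a = b" using chain[OF vs v, of a] chain[OF vs v, of b] by auto
  qed
  moreover have "(\<lambda>n. (par^^n) v) ` {0..dep v} \<subseteq> V" using chain[OF vs v] by auto
  ultimately have "card {0..dep v} \<le> card V" using card_inj_on_le fin by blast
  then show ?thesis by simp
qed



lemma rehang:
  assumes vs: "validS V E inc dep par t" and fin: "finite V"
    and e: "e \<in> E" "inc e = {x, y}" "x \<in> V" "y \<in> V"
    and nx: "x \<notin> desc V dep par y" and le: "dep y \<le> dep x"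
  shows "\<exists>dep' par' t'. validS V E inc dep' par' t' \<and> (\<Sum>v\<in>V. dep v) < (\<Sum>v\<in>V. dep' v)"
proof -
  define D where "D = desc V dep par y"
  define k where "k = Suc (dep x) - dep y"
  define dep' where "dep' = (\<lambda>w. if w \<in> D then dep w + k else dep w)"
  define par' where "par' = par(y := x)"
  define t' where "t' = t(y := e)"
  have kpos: "0 < k" using le by (simp add: k_def)
  have yD: "y \<in> D" using desc_refl e by (simp add: D_def)
  have "validS V E inc dep' par' t'"
    unfolding validS_def
  proof (intro ballI impI)
    fix w assume w: "w \<in> V" "0 < dep' w"
    show "par' w \<in> V \<and> Suc (dep' (par' w)) = dep' w \<and> t' w \<in> E \<and> inc (t' w) = {w, par' w}"
    proof (cases "w = y")
      case True
      have "x \<notin> D" using nx by (simp add: D_def)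
      then show ?thesis using True e yD le by (auto simp: par'_def t'_def dep'_def k_def)
    next
      case False
      show ?thesis
      proof (cases "w \<in> D")
        case True
        have "dep y \<le> dep w" "dep w \<noteq> dep y" using desc_dep[OF vs, of w y] True False
          by (auto simp: D_def)
        then have dw: "0 < dep w" by simp
        then have "par w \<in> D" using desc_step[OF vs w(1) dw, of y] True False by (simp add: D_def)
        then show ?thesis using vs w dw True False unfolding validS_def
          by (auto simp: par'_def t'_def dep'_def)
      next
        case F: False
        then have dw: "0 < dep w" using w by (simp add: dep'_def)
        then have "par w \<notin> D" using desc_step[OF vs w(1) dw, of y] F by (simp add: D_def)
        then show ?thesis using vs w dw F False unfolding validS_def
          by (auto simp: par'_def t'_def dep'_def)
      qed
    qed
  qed
  moreover have "(\<Sum>v\<in>V. dep v) < (\<Sum>v\<in>V. dep' v)"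
    by (rule sum_strict_mono_ex1[OF fin]) (use yD e kpos in \<open>auto simp: dep'_def\<close>)
  ultimately show ?thesis by blast
qed

lemma exists_normal:
  assumes lm: "loopless_multigraph V E inc"
  shows "\<exists>dep par t. validS V E inc dep par t \<and>
    (\<forall>e\<in>E. \<exists>a b. inc e = {a,b} \<and> a \<noteq> b \<and> b \<in> desc V dep par a)"
proof -
  have fin: "finite V" using lm by (simp add: loopless_multigraph_def)
  let ?P = "\<lambda>(dep, par, t). validS V E inc dep par t"
  let ?f = "\<lambda>(dep :: 'a \<Rightarrow> nat, par :: 'a \<Rightarrow> 'a, t :: 'a \<Rightarrow> 'b). \<Sum>v\<in>V. dep v"
  have P0: "?P ((\<lambda>_. 0), (\<lambda>v. v), (\<lambda>_. undefined))" by (simp add: validS_def)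
  have bnd: "\<forall>s. ?P s \<longrightarrow> ?f s < Suc (card V * card V)"
  proof (intro allI impI)
    fix s assume "?P s"
    then obtain dep par t where s: "s = (dep, par, t)" "validS V E inc dep par t" by auto
    have "(\<Sum>v\<in>V. dep v) \<le> (\<Sum>v\<in>V. card V)"
      by (rule sum_mono) (use dep_bound[OF s(2) fin] in \<open>auto simp: less_imp_le\<close>)
    then show "?f s < Suc (card V * card V)" using s by simp
  qed
  obtain s where s: "?P s" "\<forall>s'. ?P s' \<longrightarrow> ?f s' \<le> ?f s"
    using Lattices_Big.ex_has_greatest_nat[of ?P, OF P0 bnd] by blast
  obtain dep par t where st: "s = (dep, par, t)" by (cases s) auto
  have vs: "validS V E inc dep par t" using s st by simp
  have mx: "\<And>dep' par' t'. validS V E inc dep' par' t' \<Longrightarrow> (\<Sum>v\<in>V. dep' v) \<le> (\<Sum>v\<in>V. dep v)"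
    using s(2) st by fastforce
  have "\<forall>e\<in>E. \<exists>a b. inc e = {a,b} \<and> a \<noteq> b \<and> b \<in> desc V dep par a"
  proof
    fix e assume e: "e \<in> E"
    have "inc e \<subseteq> V" "card (inc e) = 2" using lm e by (auto simp: loopless_multigraph_def)
    then obtain x y where xy: "inc e = {x, y}" "x \<noteq> y" "x \<in> V" "y \<in> V" by (auto simp: card_2_iff)
    show "\<exists>a b. inc e = {a,b} \<and> a \<noteq> b \<and> b \<in> desc V dep par a"
    proof (cases "y \<in> desc V dep par x \<or> x \<in> desc V dep par y")
      case True then show ?thesis using xy by (metis insert_commute)
    next
      case False
      show ?thesis
      proof (cases "dep y \<le> dep x")
        case True
        from rehang[OF vs fin e xy(1) xy(3) xy(4)] False True mx show ?thesis by fastforce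
      next
        case F2: False
        have "inc e = {y, x}" using xy by auto
        from rehang[OF vs fin e this xy(4) xy(3)] False F2 mx show ?thesis by fastforce
      qed
    qed
  qed
  then show ?thesis using vs by blast
qed



lemma walk_append:
  "is_walk inc S u (p @ q) w \<longleftrightarrow> (\<exists>m. is_walk inc S u p m \<and> is_walk inc S m q w)"
  by (induction p arbitrary: u) auto

lemma walk_sub:
  "is_walk inc S u p w \<Longrightarrow> (\<forall>s\<in>set p. fst (snd s) \<in> S') \<Longrightarrow> is_walk inc S' u p w"
  by (induction p arbitrary: u) auto

lemma walk_steps:
  "is_walk inc S u p w \<Longrightarrow> (a, e, b) \<in> set p \<Longrightarrow>
    a \<in> insert u (set (map (\<lambda>s. snd (snd s)) p)) \<and> b \<in> set (map (\<lambda>s. snd (snd s)) p) \<and> e \<in> S \<and> inc e = {a, b}"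
proof (induction p arbitrary: u)
  case (Cons s p)
  obtain x y z where s: "s = (x, y, z)" by (cases s)
  show ?case
  proof (cases "s = (a, e, b)")
    case True then show ?thesis using Cons.prems s by auto
  next
    case False
    then have "(a, e, b) \<in> set p" using Cons.prems by auto
    then show ?thesis using Cons.IH[of z] Cons.prems s by auto
  qed
qed simp

lemma walk_last:
  "is_walk inc S u p w \<Longrightarrow> p \<noteq> [] \<Longrightarrow> w \<in> set (map (\<lambda>s. snd (snd s)) p)"
proof (induction p arbitrary: u)
  case (Cons s p) then show ?case by (cases s; cases p) auto
qed simp

lemma walk_nth:
  "is_walk inc S u p w \<Longrightarrow> i < length p \<Longrightarrow> fst (snd (p!i)) \<in> S \<and>
     inc (fst (snd (p!i))) = {fst (p!i), snd (snd (p!i))} \<and>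
     fst (p!i) = (case i of 0 \<Rightarrow> u | Suc j \<Rightarrow> snd (snd (p!j)))"
proof (induction p arbitrary: u i)
  case (Cons s p) then show ?case
    by (cases s; cases i) (auto split: nat.splits)
qed simp

lemma walk_last_nth:
  "is_walk inc S u p w \<Longrightarrow> p \<noteq> [] \<Longrightarrow> snd (snd (p ! (length p - 1))) = w"
proof (induction p arbitrary: u)
  case (Cons s p) then show ?case by (cases s; cases p) auto
qed simp

fun downp :: "('v \<Rightarrow> 'v) \<Rightarrow> ('v \<Rightarrow> 'e) \<Rightarrow> 'v \<Rightarrow> nat \<Rightarrow> ('v \<times> 'e \<times> 'v) list" where
  "downp par t y 0 = []"
| "downp par t y (Suc n) = downp par t (par y) n @ [(par y, t y, y)]"

locale nst =
  fixes V :: "'v set" and E :: "'e set" and inc :: "'e \<Rightarrow> 'v set"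
    and dep :: "'v \<Rightarrow> nat" and par :: "'v \<Rightarrow> 'v" and t :: "'v \<Rightarrow> 'e"
  assumes lm: "loopless_multigraph V E inc"
    and vs: "validS V E inc dep par t"
    and nrm: "\<forall>e\<in>E. \<exists>a b. inc e = {a,b} \<and> a \<noteq> b \<and> b \<in> desc V dep par a"
begin

definition "F = t ` {v\<in>V. 0 < dep v}"
abbreviation "D \<equiv> desc V dep par"

lemma val: "v \<in> V \<Longrightarrow> 0 < dep v \<Longrightarrow> par v \<in> V \<and> Suc (dep (par v)) = dep v \<and> t v \<in> E \<and> inc (t v) = {v, par v}"
  using vs by (auto simp: validS_def)

lemma FE: "F \<subseteq> E" using val by (auto simp: F_def)

lemma incE: "e \<in> E \<Longrightarrow> inc e \<subseteq> V \<and> card (inc e) = 2"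
  using lm by (auto simp: loopless_multigraph_def)

lemma t_inj: "v \<in> V \<Longrightarrow> 0 < dep v \<Longrightarrow> w \<in> V \<Longrightarrow> 0 < dep w \<Longrightarrow> t v = t w \<Longrightarrow> v = w"
proof (rule ccontr)
  assume a: "v \<in> V" "0 < dep v" "w \<in> V" "0 < dep w" "t v = t w" "v \<noteq> w"
  then have "{v, par v} = {w, par w}" using val by metis
  then have "v = par w" "w = par v" using a(6) by (auto simp: doubleton_eq_iff)
  then show False using val[OF a(1,2)] val[OF a(3,4)] by simp
qed

lemma par_notD: "v \<in> V \<Longrightarrow> 0 < dep v \<Longrightarrow> par v \<notin> D v"
  using val desc_dep[OF vs, of "par v" v] by fastforce

lemma tF: "e \<in> F \<Longrightarrow> \<exists>v. v \<in> V \<and> 0 < dep v \<and> e = t v"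
  by (auto simp: F_def)

end



context nst begin

lemma forestF: "forest inc F"
  unfolding forest_def
proof (intro notI, elim exE)
  fix u p assume cyc: "is_cycle inc F u p"
  then have ne: "p \<noteq> []" and w: "is_walk inc F u p u"
    and de: "distinct (map (\<lambda>s. fst (snd s)) p)" by (auto simp: is_cycle_def)
  define n where "n = length p"
  have n0: "0 < n" using ne by (simp add: n_def)
  define b where "b = (\<lambda>i. snd (snd (p!i)))"
  define a where "a = (\<lambda>i. fst (p!i))"
  define e where "e = (\<lambda>i. fst (snd (p!i)))"
  have st: "\<And>i. i < n \<Longrightarrow> e i \<in> F \<and> inc (e i) = {a i, b i} \<and> a i = (case i of 0 \<Rightarrow> u | Suc j \<Rightarrow> b j)"
    using walk_nth[OF w] by (auto simp: a_def b_def e_def n_def split: nat.splits)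
  have ul: "b (n - 1) = u" using walk_last_nth[OF w ne] by (simp add: b_def n_def)
  have abne: "\<And>i. i < n \<Longrightarrow> a i \<noteq> b i"
  proof -
    fix i assume "i < n"
    then have "card {a i, b i} = 2" using st incE FE by (metis subsetD)
    then show "a i \<noteq> b i" by (cases "a i = b i") auto
  qed
  define M where "M = Max ((\<lambda>i. dep (b i)) ` {..<n})"
  have "M \<in> (\<lambda>i. dep (b i)) ` {..<n}" unfolding M_def by (rule Max_in) (use n0 in auto)
  then obtain k where k: "k < n" "dep (b k) = M" by auto
  have bM: "\<And>i. i < n \<Longrightarrow> dep (b i) \<le> M" unfolding M_def by (rule Max_ge) auto
  have aM: "\<And>i. i < n \<Longrightarrow> dep (a i) \<le> M"
  proof -
    fix i assume i: "i < n"
    show "dep (a i) \<le> M"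
    proof (cases i)
      case 0 then show ?thesis using st[OF i] ul bM[of "n - 1"] n0 by simp
    next
      case (Suc j) then show ?thesis using st[OF i] bM[of j] i by simp
    qed
  qed
  have ek: "e k = t (b k)"
  proof -
    obtain v where v: "v \<in> V" "0 < dep v" "e k = t v" using tF st[OF k(1)] by blast
    have ie: "{v, par v} = {a k, b k}" using val[OF v(1,2)] st[OF k(1)] v(3) by simp
    show ?thesis
    proof (cases "v = b k")
      case True then show ?thesis using v by simp
    next
      case False
      then have "v = a k" "par v = b k" using ie abne[OF k(1)] by (auto simp: doubleton_eq_iff)
      then show ?thesis using val[OF v(1,2)] aM[OF k(1)] k(2) by simp
    qed
  qed
  define k' where "k' = (if k + 1 < n then k + 1 else 0)"
  have k'n: "k' < n" using k n0 by (simp add: k'_def)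
  have ak': "a k' = b k"
  proof (cases "k + 1 < n")
    case True then show ?thesis using st[OF k'n] by (simp add: k'_def)
  next
    case False then have "k = n - 1" using k(1) by simp
    then show ?thesis using st[OF k'n] ul False by (simp add: k'_def)
  qed
  have ek': "e k' = t (b k)"
  proof -
    obtain v where v: "v \<in> V" "0 < dep v" "e k' = t v" using tF st[OF k'n] by blast
    have ie: "{v, par v} = {b k, b k'}" using val[OF v(1,2)] st[OF k'n] v(3) ak' by simp
    show ?thesis
    proof (cases "v = b k")
      case True then show ?thesis using v by simp
    next
      case False
      then have "v = b k'" "par v = b k" using ie abne[OF k'n] ak' by (auto simp: doubleton_eq_iff)
      then show ?thesis using val[OF v(1,2)] bM[OF k'n] k(2) by simp
    qed
  qed
  have "map (\<lambda>s. fst (snd s)) p ! k' = map (\<lambda>s. fst (snd s)) p ! k"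
    using ek ek' k(1) k'n by (simp add: e_def n_def)
  then have "k' = k" using nth_eq_iff_index_eq[OF de] k(1) k'n by (simp add: n_def)
  then have "n = 1" "k = 0" using k by (auto simp: k'_def split: if_splits)
  then have "a k = b k" using st[OF k(1)] ul by simp
  then show False using abne[OF k(1)] by simp
qed

lemma downp_props:
  "y \<in> V \<Longrightarrow> n \<le> dep y \<Longrightarrow>
    is_walk inc F ((par^^n) y) (downp par t y n) y \<and>
    distinct (map (\<lambda>s. snd (snd s)) (downp par t y n)) \<and>
    (\<forall>s\<in>set (downp par t y n). snd (snd s) \<in> V \<and> dep y - n < dep (snd (snd s)) \<and>
         dep (snd (snd s)) \<le> dep y \<and> 0 < dep (snd (snd s)) \<and>
         fst (snd s) = t (snd (snd s)) \<and> fst s = par (snd (snd s)))"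
proof (induction n arbitrary: y)
  case 0 then show ?case by simp
next
  case (Suc n)
  have dy: "0 < dep y" using Suc.prems by simp
  note pv = val[OF Suc.prems(1) dy]
  have IH: "is_walk inc F ((par^^n) (par y)) (downp par t (par y) n) (par y) \<and>
    distinct (map (\<lambda>s. snd (snd s)) (downp par t (par y) n)) \<and>
    (\<forall>s\<in>set (downp par t (par y) n). snd (snd s) \<in> V \<and> dep (par y) - n < dep (snd (snd s)) \<and>
         dep (snd (snd s)) \<le> dep (par y) \<and> 0 < dep (snd (snd s)) \<and>
         fst (snd s) = t (snd (snd s)) \<and> fst s = par (snd (snd s)))"
    using Suc.IH[of "par y"] pv Suc.prems by simp
  have tyF: "t y \<in> F" using Suc.prems(1) dy by (auto simp: F_def)
  have eq: "(par^^Suc n) y = (par^^n) (par y)" by (metis comp_apply funpow_Suc_right)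
  show ?case
    using IH pv tyF Suc.prems dy unfolding eq
    by (auto simp: walk_append)
qed

lemma down_path:
  assumes "y \<in> D x"
  shows "\<exists>p. is_path inc F x p y"
proof -
  obtain n where n: "y \<in> V" "n \<le> dep y" "(par^^n) y = x" using assms by (auto simp: desc_def)
  note dp = downp_props[OF n(1,2)]
  have "dep x = dep y - n" using chain[OF vs n(1,2)] n(3) by simp
  then have "x \<notin> set (map (\<lambda>s. snd (snd s)) (downp par t y n))" using dp by auto
  then have "is_path inc F x (downp par t y n) y" using dp n(3) by (simp add: is_path_def)
  then show ?thesis by blast
qed

lemma maximal: "e \<in> E - F \<Longrightarrow> \<not> forest inc (insert e F)"
proof -
  assume e: "e \<in> E - F"
  then obtain a b where ab: "inc e = {a, b}" "a \<noteq> b" "b \<in> D a" using nrm by blast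
  obtain n where n: "b \<in> V" "n \<le> dep b" "(par^^n) b = a" using ab(3) by (auto simp: desc_def)
  define P where "P = downp par t b n"
  have dp1: "is_walk inc F a P b" and dp2: "distinct (map (\<lambda>s. snd (snd s)) P)"
    and dp3: "\<forall>s\<in>set P. snd (snd s) \<in> V \<and> dep b - n < dep (snd (snd s)) \<and>
         dep (snd (snd s)) \<le> dep b \<and> 0 < dep (snd (snd s)) \<and>
         fst (snd s) = t (snd (snd s)) \<and> fst s = par (snd (snd s))"
    using downp_props[OF n(1,2)] n(3) unfolding P_def by auto
  have "dep a = dep b - n" using chain[OF vs n(1,2)] n(3) by simp
  then have anot: "a \<notin> set (map (\<lambda>s. snd (snd s)) P)" using dp3 by auto
  have sub: "\<forall>s\<in>set P. fst (snd s) \<in> insert e F"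
  proof
    fix s assume s: "s \<in> set P"
    obtain x y z where "s = (x, y, z)" by (cases s)
    then show "fst (snd s) \<in> insert e F" using walk_steps[OF dp1, of x y z] s by simp
  qed
  have w: "is_walk inc (insert e F) a P b" by (rule walk_sub[OF dp1 sub])
  have edges: "map (\<lambda>s. fst (snd s)) P = map t (map (\<lambda>s. snd (snd s)) P)"
    unfolding map_map by (rule map_cong) (use dp3 in auto)
  have "inj_on t (set (map (\<lambda>s. snd (snd s)) P))"
  proof (rule inj_onI)
    fix x y assume "x \<in> set (map (\<lambda>s. snd (snd s)) P)" "y \<in> set (map (\<lambda>s. snd (snd s)) P)" "t x = t y"
    then show "x = y" using dp3 t_inj by (metis (no_types, lifting) imageE list.set_map)
  qed
  then have de: "distinct (map (\<lambda>s. fst (snd s)) P)"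
    using dp2 unfolding edges by (metis distinct_map)
  have enot: "e \<notin> set (map (\<lambda>s. fst (snd s)) P)"
  proof
    assume "e \<in> set (map (\<lambda>s. fst (snd s)) P)"
    then obtain s where "s \<in> set P" "e = fst (snd s)" by auto
    then show False using dp3 e by (auto simp: F_def)
  qed
  have "inc e = {b, a}" using ab by auto
  then have "is_cycle inc (insert e F) b ((b, e, a) # P)"
    unfolding is_cycle_def using w de dp2 anot enot by simp
  then show ?thesis by (auto simp: forest_def)
qed

end


context nst begin

definition "Or1 e = (SOME ab. inc e = {fst ab, snd ab} \<and> fst ab \<noteq> snd ab \<and> snd ab \<in> D (fst ab))"
definition "Or2 e = (if e \<in> F then Or1 e else prod.swap (Or1 e))"

lemma Or1_prop: "e \<in> E \<Longrightarrow> inc e = {fst (Or1 e), snd (Or1 e)} \<and> fst (Or1 e) \<noteq> snd (Or1 e) \<and> snd (Or1 e) \<in> D (fst (Or1 e))"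
proof -
  assume "e \<in> E"
  then obtain a b where "inc e = {a,b} \<and> a \<noteq> b \<and> b \<in> D a" using nrm by blast
  then have "\<exists>ab. inc e = {fst ab, snd ab} \<and> fst ab \<noteq> snd ab \<and> snd ab \<in> D (fst ab)"
    by (intro exI[of _ "(a,b)"]) simp
  then show ?thesis unfolding Or1_def by (rule someI_ex)
qed

lemma Or1_t: assumes v: "v \<in> V" "0 < dep v" shows "Or1 (t v) = (par v, v)"
proof -
  note pv = val[OF v]
  have p: "{v, par v} = {fst (Or1 (t v)), snd (Or1 (t v))}" "fst (Or1 (t v)) \<noteq> snd (Or1 (t v))"
      "snd (Or1 (t v)) \<in> D (fst (Or1 (t v)))"
    using Or1_prop[of "t v"] pv by auto
  have "\<not> (fst (Or1 (t v)) = v \<and> snd (Or1 (t v)) = par v)"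
    using par_notD[OF v] p(3) by auto
  then have "fst (Or1 (t v)) = par v" "snd (Or1 (t v)) = v" using p(1,2) by (auto simp: doubleton_eq_iff)
  then show ?thesis by (metis prod.collapse)
qed

lemma orient1: "orientation E inc Or1"
  unfolding orientation_def using Or1_prop by blast

lemma orient2: "orientation E inc Or2"
  unfolding orientation_def Or2_def using Or1_prop by (auto simp: insert_commute)

lemma walk_cut:
  assumes c: "c \<in> V" "0 < dep c"
  shows "is_walk inc (F - {t c}) u p w \<Longrightarrow> (u \<in> D c \<longleftrightarrow> w \<in> D c)"
proof (induction p arbitrary: u)
  case Nil then show ?case by simp
next
  case (Cons s p)
  obtain x e y where s: "s = (x, e, y)" by (cases s)
  have h: "x = u" "e \<in> F" "e \<noteq> t c" "inc e = {x, y}" "is_walk inc (F - {t c}) y p w"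
    using Cons.prems s by auto
  obtain v where v: "v \<in> V" "0 < dep v" "e = t v" using tF h(2) by blast
  have "v \<noteq> c" using v h(3) by auto
  then have "v \<in> D c \<longleftrightarrow> par v \<in> D c" using desc_step[OF vs v(1,2), of c] by simp
  moreover have "{x, y} = {v, par v}" using h(4) val[OF v(1,2)] v(3) by simp
  ultimately have "x \<in> D c \<longleftrightarrow> y \<in> D c" by (auto simp: doubleton_eq_iff)
  then show ?case using Cons.IH[OF h(5)] h(1) by simp
qed

lemma comp_sub: assumes c: "c \<in> V" "0 < dep c" "x \<in> component inc (F - {t c}) z"
  shows "x \<in> D c \<longleftrightarrow> z \<in> D c"
  using assms walk_cut[OF c(1,2)] by (auto simp: component_def)

lemma cut_ok: assumes i: "i \<in> F" and j: "j \<in> E" shows "cut_coeff E inc F Or1 i j \<in> {0, 1}"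
proof -
  obtain c where c: "c \<in> V" "0 < dep c" "i = t c" using tF i by blast
  have o: "Or1 i = (par c, c)" using Or1_t[OF c(1,2)] c(3) by simp
  define K1 where "K1 = component inc (F - {i}) (par c)"
  define K2 where "K2 = component inc (F - {i}) c"
  have K1: "\<And>x. x \<in> K1 \<Longrightarrow> x \<notin> D c" using comp_sub[OF c(1,2)] par_notD[OF c(1,2)] c(3)
    unfolding K1_def by blast
  have K2: "\<And>x. x \<in> K2 \<Longrightarrow> x \<in> D c" using comp_sub[OF c(1,2)] desc_refl[OF c(1)] c(3)
    unfolding K2_def by blast
  have oj: "snd (Or1 j) \<in> D (fst (Or1 j))" using Or1_prop[OF j] by simp
  have "\<not> (fst (Or1 j) \<in> K2 \<and> snd (Or1 j) \<in> K1)"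
    using K1 K2 desc_trans[OF vs oj] by blast
  then show ?thesis unfolding cut_coeff_def Let_def o K1_def[symmetric] K2_def[symmetric]
    by (simp add: K1_def K2_def o)
qed

end


context nst begin

abbreviation "tg p \<equiv> set (map (\<lambda>s. snd (snd s)) p)"

lemma crossing:
  assumes c: "c \<in> V" "0 < dep c" and w: "is_walk inc F s p w"
    and ch: "(s \<in> D c) \<noteq> (w \<in> D c)"
  shows "c \<in> insert s (tg p) \<and> par c \<in> insert s (tg p)"
proof -
  have "\<exists>st\<in>set p. fst (snd st) = t c"
  proof (rule ccontr)
    assume "\<not> ?thesis"
    then have "\<forall>st\<in>set p. fst (snd st) \<in> F - {t c}"
      using walk_steps[OF w] by fastforce
    then have "is_walk inc (F - {t c}) s p w" by (rule walk_sub[OF w])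
    then show False using walk_cut[OF c] ch by blast
  qed
  then obtain x y where st: "(x, t c, y) \<in> set p" by force
  from walk_steps[OF w st] have "x \<in> insert s (tg p)" "y \<in> tg p" "inc (t c) = {x, y}" by auto
  moreover have "inc (t c) = {c, par c}" using val[OF c] by simp
  ultimately show ?thesis by (auto simp: doubleton_eq_iff)
qed

lemma first_step:
  assumes p: "is_path inc F x ((x', e, b) # p') y" and y: "y \<in> D x"
  shows "x' = x \<and> e = t b \<and> x = par b \<and> b \<in> V \<and> 0 < dep b \<and> y \<in> D b \<and> is_path inc F b p' y"
proof -
  have h: "x' = x" "e \<in> F" "inc e = {x, b}" "is_walk inc F b p' y"
    and dis: "distinct (x # b # map (\<lambda>s. snd (snd s)) p')"
    using p by (auto simp: is_path_def)
  obtain v where v: "v \<in> V" "0 < dep v" "e = t v" using tF h(2) by blast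
  have xb: "{x, b} = {v, par v}" using h(3) val[OF v(1,2)] v(3) by simp
  have xnb: "x \<noteq> b" using dis by simp
  show ?thesis
  proof (cases "v = x")
    case True
    then have b: "b = par v" using xb xnb by (auto simp: doubleton_eq_iff)
    have "b \<notin> D v" using par_notD[OF v(1,2)] b by simp
    moreover have "y \<in> D v" using y True by simp
    ultimately have "v \<in> insert b (tg p')" using crossing[OF v(1,2) h(4)] by blast
    then show ?thesis using True dis xnb by auto
  next
    case False
    then have vb: "v = b" "par v = x" using xb by (auto simp: doubleton_eq_iff)
    have "y \<in> D b"
    proof (rule ccontr)
      assume "y \<notin> D b"
      moreover have "b \<in> D b" using desc_refl v(1) vb by simp
      ultimately have "par b \<in> insert b (tg p')" using crossing[OF _ _ h(4)] v vb by blast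
      then show False using vb dis xnb by auto
    qed
    moreover have "is_path inc F b p' y" using h(4) dis by (simp add: is_path_def)
    ultimately show ?thesis using vb v h(1) by simp
  qed
qed

lemma all_down:
  "is_path inc F x p y \<Longrightarrow> y \<in> D x \<Longrightarrow> \<forall>s\<in>set p. snd (snd s) \<in> V \<and> 0 < dep (snd (snd s)) \<and>
     fst (snd s) = t (snd (snd s)) \<and> fst s = par (snd (snd s))"
proof (induction p arbitrary: x)
  case Nil then show ?case by simp
next
  case (Cons s p)
  obtain x' e b where s: "s = (x', e, b)" by (cases s)
  from first_step[OF Cons.prems(1)[unfolded s] Cons.prems(2)] Cons.IH[of b] s show ?case by auto
qed

lemma path_unique:
  "is_path inc F x p y \<Longrightarrow> is_path inc F x q y \<Longrightarrow> y \<in> D x \<Longrightarrow> p = q"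
proof (induction p arbitrary: x q)
  case Nil
  then have xy: "x = y" by (simp add: is_path_def)
  show ?case
  proof (rule ccontr)
    assume "[] \<noteq> q"
    then have "y \<in> tg q" using walk_last[of inc F x q y] Nil.prems by (simp add: is_path_def)
    then show False using Nil.prems xy by (auto simp: is_path_def)
  qed
next
  case (Cons s p)
  obtain x' e b where s: "s = (x', e, b)" by (cases s)
  have "s # p \<noteq> []" by simp
  then have "y \<in> tg (s # p)" using walk_last[of inc F x "s # p" y] Cons.prems by (simp add: is_path_def)
  then have "x \<noteq> y" using Cons.prems(1) by (auto simp: is_path_def)
  then obtain s' q' where q: "q = s' # q'" using Cons.prems(2) by (cases q) (auto simp: is_path_def)
  obtain x'' e' b' where s': "s' = (x'', e', b')" by (cases s')
  note f1 = first_step[OF Cons.prems(1)[unfolded s] Cons.prems(3)]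
  note f2 = first_step[OF Cons.prems(2)[unfolded q s'] Cons.prems(3)]
  have "dep b = dep b'" using f1 f2 val[of b] val[of b'] by auto
  then have "b = b'" using desc_same[OF vs, of y b b'] f1 f2 by simp
  then show ?case using Cons.IH[of b q'] f1 f2 s s' q by simp
qed

lemma cycle_ok: assumes i: "i \<in> E - F" and j: "j \<in> E" shows "cycle_coeff inc F Or2 i j \<in> {0, 1}"
proof -
  obtain a b where ab: "Or1 i = (a, b)" by (cases "Or1 i")
  have ab2: "a \<noteq> b" "b \<in> D a" using Or1_prop[of i] i ab by auto
  have o2: "Or2 i = (b, a)" using i ab by (simp add: Or2_def)
  obtain P where P: "is_path inc F a P b" using down_path[OF ab2(2)] by blast
  have "(THE p. is_path inc F a p b) = P"
    using P path_unique[OF _ P ab2(2)] by (intro the_equality) blast+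
  then have C: "(THE p. is_path inc F (snd (Or2 i)) p (fst (Or2 i))) = P" using o2 by simp
  have good: "\<forall>s\<in>set ((b, i, a) # P). Or2 (fst (snd s)) = (fst s, snd (snd s))"
  proof
    fix s assume s: "s \<in> set ((b, i, a) # P)"
    show "Or2 (fst (snd s)) = (fst s, snd (snd s))"
    proof (cases "s = (b, i, a)")
      case True then show ?thesis using o2 by simp
    next
      case False
      then have "s \<in> set P" using s by simp
      then have h: "snd (snd s) \<in> V" "0 < dep (snd (snd s))" "fst (snd s) = t (snd (snd s))"
          "fst s = par (snd (snd s))"
        using all_down[OF P ab2(2)] by auto
      have "t (snd (snd s)) \<in> F" using h by (auto simp: F_def)
      then show ?thesis using h Or1_t[OF h(1,2)] by (simp add: Or2_def)
    qed
  qed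
  have "(snd (Or2 j), j, fst (Or2 j)) \<in> set ((b, i, a) # P) \<Longrightarrow>
        (fst (Or2 j), j, snd (Or2 j)) \<in> set ((b, i, a) # P)"
  proof -
    assume m: "(snd (Or2 j), j, fst (Or2 j)) \<in> set ((b, i, a) # P)"
    then have "Or2 j = (snd (Or2 j), fst (Or2 j))" using good by fastforce
    then have "fst (Or2 j) = snd (Or2 j)" by (metis fst_conv)
    then show ?thesis using m by simp
  qed
  moreover have eqC: "(fst (Or2 i), i, snd (Or2 i)) # (THE p. is_path inc F (snd (Or2 i)) p (fst (Or2 i)))
     = (b, i, a) # P" using C o2 by simp
  ultimately show ?thesis
    unfolding cycle_coeff_def Let_def eqC by auto
qed

end

theorem lemma3p2:
  fixes V :: "'v set" and E :: "'e set" and inc :: "'e \<Rightarrow> 'v set"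
  assumes "loopless_multigraph V E inc"
  shows "\<exists>F. max_spanning_forest E inc F \<and>
           (\<exists>Or1. orientation E inc Or1 \<and>
              (\<forall>i\<in>F. \<forall>j\<in>E. cut_coeff E inc F Or1 i j \<in> {0, 1})) \<and>
           (\<exists>Or2. orientation E inc Or2 \<and>
              (\<forall>i\<in>E - F. \<forall>j\<in>E. cycle_coeff inc F Or2 i j \<in> {0, 1}))"
proof -
  obtain dep par t where vs: "validS V E inc dep par t"
    and nrm: "\<forall>e\<in>E. \<exists>a b. inc e = {a,b} \<and> a \<noteq> b \<and> b \<in> desc V dep par a"
    using exists_normal[OF assms] by blast
  interpret N: nst V E inc dep par t using assms vs nrm by unfold_locales
  have "max_spanning_forest E inc N.F"
    unfolding max_spanning_forest_def using N.FE N.forestF N.maximal by blast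
  moreover have "orientation E inc N.Or1 \<and> (\<forall>i\<in>N.F. \<forall>j\<in>E. cut_coeff E inc N.F N.Or1 i j \<in> {0, 1})"
    using N.orient1 N.cut_ok by blast
  moreover have "orientation E inc N.Or2 \<and> (\<forall>i\<in>E - N.F. \<forall>j\<in>E. cycle_coeff inc N.F N.Or2 i j \<in> {0, 1})"
    using N.orient2 N.cycle_ok by blast
  ultimately show ?thesis by blast
qed

end
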